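(* Let $\Gamma$ be a graph of order $n$, size $m$, minimum degree $\delta$ and maximum degree $\Delta$. For every integer $k\in\{2-\delta,\dots,\delta\}$, $$\gamma_k^o(\Gamma)\ge\left\lceil\frac{(n+2\Delta+k)-\sqrt{(n+2\Delta+k)^2-4(2m+kn)}}{2}\right\rceil.$$
   Context: Graphs are finite and simple. For $S\subseteq V$ and $v\in V$, $\delta_S(v)$ is the number of neighbours of $v$ in $S$, $\overline{S}=V\setminus S$, and $\partial(S)$ the set of vertices of $\overline{S}$ with a neighbour in $S$. A nonempty $S$ is an offensive $k$-alliance if $\delta_S(v)\ge\delta_{\overline{S}}(v)+k$ for every $v\in\partial(S)$, and a global offensive $k$-alliance if moreover it is dominating; $\gamma_k^o(\Gamma)$ is the minimum cardinality of a global offensive $k$-alliance in $\Gamma$. *)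

theory Defs
  imports Complex_Main
begin

definition simple_graph :: "'a set \<Rightarrow> ('a \<Rightarrow> 'a \<Rightarrow> bool) \<Rightarrow> bool" where
  "simple_graph V E \<longleftrightarrow> finite V \<and> (\<forall>u v. E u v \<longrightarrow> u \<in> V \<and> v \<in> V)
     \<and> (\<forall>u v. E u v \<longrightarrow> E v u) \<and> (\<forall>v. \<not> E v v)"

definition deg_in :: "('a \<Rightarrow> 'a \<Rightarrow> bool) \<Rightarrow> 'a set \<Rightarrow> 'a \<Rightarrow> nat" where
  "deg_in E S v = card {u \<in> S. E v u}"

definition degree :: "'a set \<Rightarrow> ('a \<Rightarrow> 'a \<Rightarrow> bool) \<Rightarrow> 'a \<Rightarrow> nat" where
  "degree V E v = deg_in E V v"

definition min_degree :: "'a set \<Rightarrow> ('a \<Rightarrow> 'a \<Rightarrow> bool) \<Rightarrow> nat" where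
  "min_degree V E = Min (degree V E ` V)"

definition max_degree :: "'a set \<Rightarrow> ('a \<Rightarrow> 'a \<Rightarrow> bool) \<Rightarrow> nat" where
  "max_degree V E = Max (degree V E ` V)"

definition graph_size :: "('a \<Rightarrow> 'a \<Rightarrow> bool) \<Rightarrow> nat" where
  "graph_size E = card {{u, v} | u v. E u v}"

definition boundary :: "'a set \<Rightarrow> ('a \<Rightarrow> 'a \<Rightarrow> bool) \<Rightarrow> 'a set \<Rightarrow> 'a set" where
  "boundary V E S = {v \<in> V - S. \<exists>u \<in> S. E v u}"

definition offensive_alliance :: "'a set \<Rightarrow> ('a \<Rightarrow> 'a \<Rightarrow> bool) \<Rightarrow> int \<Rightarrow> 'a set \<Rightarrow> bool" where
  "offensive_alliance V E k S \<longleftrightarrow> S \<noteq> {} \<and> S \<subseteq> V \<and>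
     (\<forall>v \<in> boundary V E S. int (deg_in E S v) \<ge> int (deg_in E (V - S) v) + k)"

definition dominating :: "'a set \<Rightarrow> ('a \<Rightarrow> 'a \<Rightarrow> bool) \<Rightarrow> 'a set \<Rightarrow> bool" where
  "dominating V E S \<longleftrightarrow> S \<subseteq> V \<and> (\<forall>v \<in> V - S. \<exists>u \<in> S. E v u)"

definition global_offensive_alliance :: "'a set \<Rightarrow> ('a \<Rightarrow> 'a \<Rightarrow> bool) \<Rightarrow> int \<Rightarrow> 'a set \<Rightarrow> bool" where
  "global_offensive_alliance V E k S \<longleftrightarrow> offensive_alliance V E k S \<and> dominating V E S"

definition gamma_off :: "'a set \<Rightarrow> ('a \<Rightarrow> 'a \<Rightarrow> bool) \<Rightarrow> int \<Rightarrow> nat" where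
  "gamma_off V E k = Min {card S | S. global_offensive_alliance V E k S}"

end

theory Submission
  imports Defs
begin

lemma handshake:
  assumes g: "simple_graph V E"
  shows "2 * graph_size E = (\<Sum>v\<in>V. degree V E v)"
proof -
  have fin: "finite V" and inV: "\<And>u v. E u v \<Longrightarrow> u \<in> V \<and> v \<in> V"
    and sym: "\<And>u v. E u v \<Longrightarrow> E v u" and irr: "\<And>v. \<not> E v v"
    using g by (auto simp: simple_graph_def)
  define D where "D = Sigma V (\<lambda>v. {u\<in>V. E v u})"
  have finD: "finite D" unfolding D_def using fin by auto
  have cD: "card D = (\<Sum>v\<in>V. degree V E v)"
    unfolding D_def degree_def deg_in_def using fin by (simp add: card_SigmaI)
  define f where "f = (\<lambda>(u::'a,v). {u,v})"
  have eq: "{{u, v} | u v. E u v} = f ` D"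
    unfolding f_def D_def using inV by force
  have "card D = (\<Sum>y\<in>f`D. card {x\<in>D. f x = y})"
    using sum.image_gen[OF finD, of "\<lambda>_. (1::nat)" f] by simp
  also have "\<dots> = (\<Sum>y\<in>f`D. 2)"
  proof (rule sum.cong[OF refl])
    fix y assume "y \<in> f ` D"
    then obtain a b where ab: "(a,b) \<in> D" "y = {a,b}" unfolding f_def by auto
    have Eab: "E a b" using ab unfolding D_def by auto
    have "{x\<in>D. f x = y} = {(a,b),(b,a)}"
      using ab Eab sym inV unfolding f_def D_def by (auto simp: doubleton_eq_iff)
    moreover have "a \<noteq> b" using Eab irr by auto
    ultimately show "card {x\<in>D. f x = y} = 2" by simp
  qed
  finally show ?thesis using cD eq unfolding graph_size_def by simp
qed

lemma card_filter_sum: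
  assumes "finite S"
  shows "card {u\<in>S. P u} = (\<Sum>u\<in>S. if P u then 1 else (0::nat))"
  using assms by (simp add: sum.If_cases Collect_conj_eq Int_commute)

lemma alliance_bound:
  assumes g: "simple_graph V E" and ga: "global_offensive_alliance V E k S"
  shows "2 * int (graph_size E) + k * (int (card V) - int (card S))
     \<le> 2 * int (card S) * int (max_degree V E) + int (card S) * (int (card V) - int (card S))"
proof -
  have fin: "finite V" and inV: "\<And>u v. E u v \<Longrightarrow> u \<in> V \<and> v \<in> V"
    and sym: "\<And>u v. E u v \<Longrightarrow> E v u"
    using g by (auto simp: simple_graph_def)
  have SV: "S \<subseteq> V" and dom: "\<And>v. v \<in> V - S \<Longrightarrow> \<exists>u\<in>S. E v u"
    and off: "\<And>v. v \<in> boundary V E S \<Longrightarrow> int (deg_in E S v) \<ge> int (deg_in E (V - S) v) + k"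
    using ga by (auto simp: global_offensive_alliance_def offensive_alliance_def dominating_def)
  have finS: "finite S" using SV fin finite_subset by blast
  define s where "s = card S"
  define n where "n = card V"
  define \<Delta> where "\<Delta> = max_degree V E"
  have cVS: "card (V - S) = n - s" unfolding n_def s_def using SV finS card_Diff_subset by blast
  have sn: "s \<le> n" unfolding n_def s_def using SV fin card_mono by blast
  have degsplit: "degree V E v = deg_in E S v + deg_in E (V - S) v" for v
  proof -
    have "{u\<in>V. E v u} = {u\<in>S. E v u} \<union> {u\<in>V - S. E v u}" using SV by auto
    moreover have "card ({u\<in>S. E v u} \<union> {u\<in>V - S. E v u}) = card {u\<in>S. E v u} + card {u\<in>V - S. E v u}"
      by (rule card_Un_disjoint) (use finS fin in auto)
    ultimately show ?thesis unfolding degree_def deg_in_def by simp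
  qed
  define e where "e = (\<Sum>v\<in>V - S. deg_in E S v)"
  have h1: "2 * int (deg_in E S v) \<ge> int (degree V E v) + k" if "v \<in> V - S" for v
  proof -
    have "v \<in> boundary V E S" using dom[OF that] that unfolding boundary_def by auto
    from off[OF this] show ?thesis using degsplit[of v] by simp
  qed
  have h1s: "2 * int e \<ge> (\<Sum>v\<in>V - S. int (degree V E v)) + k * int (n - s)"
  proof -
    have "(\<Sum>v\<in>V - S. int (degree V E v) + k) \<le> (\<Sum>v\<in>V - S. 2 * int (deg_in E S v))"
      by (rule sum_mono) (use h1 in auto)
    then show ?thesis unfolding e_def using cVS by (simp add: sum.distrib sum_distrib_left of_nat_sum mult.commute)
  qed
  have h2: "e \<le> s * (n - s)"
  proof -
    have "e \<le> (\<Sum>v\<in>V - S. s)" unfolding e_def s_def deg_in_def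
      by (rule sum_mono) (use finS in \<open>auto intro: card_mono\<close>)
    then show ?thesis using cVS by (simp add: mult.commute)
  qed
  have degmax: "degree V E v \<le> \<Delta>" if "v \<in> V" for v
    unfolding \<Delta>_def max_degree_def using fin that by auto
  have h3: "e \<le> s * \<Delta>"
  proof -
    have "e = (\<Sum>v\<in>V - S. \<Sum>u\<in>S. if E v u then 1 else (0::nat))"
      unfolding e_def deg_in_def using card_filter_sum[OF finS] by simp
    also have "\<dots> = (\<Sum>u\<in>S. \<Sum>v\<in>V - S. if E u v then 1 else (0::nat))"
    proof -
      have "(\<Sum>v\<in>V - S. \<Sum>u\<in>S. if E v u then 1 else (0::nat)) = (\<Sum>u\<in>S. \<Sum>v\<in>V - S. if E v u then 1 else (0::nat))"
        by (rule sum.swap)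
      also have "\<dots> = (\<Sum>u\<in>S. \<Sum>v\<in>V - S. if E u v then 1 else (0::nat))"
        by (intro sum.cong refl) (use sym in metis)
      finally show ?thesis .
    qed
    also have "\<dots> = (\<Sum>u\<in>S. deg_in E (V - S) u)"
      unfolding deg_in_def using card_filter_sum[of "V - S"] fin by (intro sum.cong) auto
    also have "\<dots> \<le> (\<Sum>u\<in>S. \<Delta>)"
    proof (rule sum_mono)
      fix u assume u: "u \<in> S"
      have "deg_in E (V - S) u \<le> degree V E u" unfolding deg_in_def degree_def
        by (rule card_mono) (use fin in auto)
      then show "deg_in E (V - S) u \<le> \<Delta>" using degmax[of u] u SV by auto
    qed
    finally show ?thesis unfolding s_def by simp
  qed
  have h4: "(\<Sum>v\<in>S. degree V E v) \<le> s * \<Delta>"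
  proof -
    have "(\<Sum>v\<in>S. degree V E v) \<le> (\<Sum>v\<in>S. \<Delta>)" by (rule sum_mono) (use degmax SV in auto)
    then show ?thesis unfolding s_def by simp
  qed
  have hs: "2 * graph_size E = (\<Sum>v\<in>S. degree V E v) + (\<Sum>v\<in>V - S. degree V E v)"
    using handshake[OF g] sum.subset_diff[OF SV fin] by (simp add: add.commute)
  have "int (2 * graph_size E) = int (\<Sum>v\<in>S. degree V E v) + (\<Sum>v\<in>V - S. int (degree V E v))"
    using hs by (simp add: of_nat_sum)
  then have "2 * int (graph_size E) + k * int (n - s) \<le> int (s * \<Delta>) + 2 * int e"
    using h1s h4 by linarith
  moreover have "2 * int e \<le> int (s*\<Delta>) + int (s * (n - s))" using h2 h3 by linarith
  ultimately show ?thesis using sn unfolding s_def[symmetric] n_def[symmetric] \<Delta>_def[symmetric]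
    by (simp add: of_nat_diff)
qed

theorem mainTheorem17:
  fixes V :: "'a set" and E :: "'a \<Rightarrow> 'a \<Rightarrow> bool" and k :: int
  assumes "simple_graph V E" and "V \<noteq> {}"
    and "2 - int (min_degree V E) \<le> k" and "k \<le> int (min_degree V E)"
  shows "int (gamma_off V E k) \<ge>
    (let n = real (card V); m = real (graph_size E); \<Delta> = real (max_degree V E) in
      \<lceil>((n + 2 * \<Delta> + k) - sqrt ((n + 2 * \<Delta> + k)^2 - 4 * (2 * m + k * n))) / 2\<rceil>)"
proof -
  have fin: "finite V" using assms(1) by (simp add: simple_graph_def)
  define A where "A = {card S | S. global_offensive_alliance V E k S}"
  have "V \<in> {S. global_offensive_alliance V E k S}"
    using assms(2) unfolding global_offensive_alliance_def offensive_alliance_def dominating_def boundary_def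
    by auto
  then have Ane: "A \<noteq> {}" unfolding A_def by auto
  have "A \<subseteq> {0..card V}" unfolding A_def
    using fin by (auto simp: global_offensive_alliance_def offensive_alliance_def intro: card_mono)
  then have Afin: "finite A" using finite_subset by blast
  obtain S where S: "global_offensive_alliance V E k S" "gamma_off V E k = card S"
    using Min_in[OF Afin Ane] unfolding gamma_off_def A_def[symmetric] by (auto simp: A_def)
  define n where "n = real (card V)"
  define m where "m = real (graph_size E)"
  define D where "D = real (max_degree V E)"
  define s where "s = real (card S)"
  define B where "B = n + 2 * D + k"
  define C where "C = 2 * m + k * n"
  have ib: "2 * m + k * (n - s) \<le> 2 * s * D + s * (n - s)"
  proof -
    have "real_of_int (2 * int (graph_size E) + k * (int (card V) - int (card S)))
      \<le> real_of_int (2 * int (card S) * int (max_degree V E) + int (card S) * (int (card V) - int (card S)))"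
      using alliance_bound[OF assms(1) S(1)] by linarith
    then show ?thesis unfolding m_def n_def s_def D_def by simp
  qed
  have q: "(B - 2 * s)^2 \<le> B^2 - 4 * C"
    using ib unfolding B_def C_def by (simp add: power2_eq_square algebra_simps)
  have "B - 2 * s \<le> sqrt (B^2 - 4 * C)"
  proof -
    have "B - 2 * s \<le> \<bar>B - 2 * s\<bar>" by simp
    also have "\<dots> = sqrt ((B - 2 * s)^2)" by simp
    also have "\<dots> \<le> sqrt (B^2 - 4 * C)" using q real_sqrt_le_mono by blast
    finally show ?thesis .
  qed
  then have "(B - sqrt (B^2 - 4 * C)) / 2 \<le> s" by simp
  then have "\<lceil>(B - sqrt (B^2 - 4 * C)) / 2\<rceil> \<le> int (card S)"
    unfolding s_def by (simp add: ceiling_le_iff)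
  then show ?thesis unfolding Let_def S(2) using B_def C_def n_def m_def D_def by simp
qed

end
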